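(* Let $\omega$ be a circle with center $O$ and $\xi$ an ellipse with center $O$ lying inside $\omega$. Let $(u_1,\dots,u_n)$ be a Poncelet $n$-gon for the pair $(\omega,\xi)$. Then $\sum_{i=1}^n\cos\angle u_iOu_{i+1}$ is constant in the Poncelet family of $n$-gons containing $(u_1,\dots,u_n)$.
   Context: Indices are mod $n$. A Poncelet $n$-gon for a pair of conics $(C,D)$, $D$ inside $C$, is a closed polygon with all vertices on $C$ and all sides tangent to $D$. By the Poncelet porism, if one such closed $n$-gon exists, then starting from any point of $C$ and successively drawing tangent lines to $D$ (in the same rotational sense) produces a closed $n$-gon; the Poncelet family is this continuous 1-parameter family. $\angle u_iOu_{i+1}\in[0,\pi]$ is the angle between the vectors $u_i-O$ and $u_{i+1}-O$. *)

theory Defs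
  imports "HOL-Analysis.Analysis"
begin

definition angle_at :: "complex \<Rightarrow> complex \<Rightarrow> complex \<Rightarrow> real" where
  "angle_at c u v = arccos (((u - c) \<bullet> (v - c)) / (norm (u - c) * norm (v - c)))"

definition ellipse :: "complex \<Rightarrow> real \<Rightarrow> real \<Rightarrow> real \<Rightarrow> complex set" where
  "ellipse c a b phi = {c + cis phi * Complex (a * cos t) (b * sin t) | t. True}"

definition line_through :: "complex \<Rightarrow> complex \<Rightarrow> complex set" where
  "line_through p q = {p + of_real t * (q - p) | t. True}"

text \<open>The line through p, q is tangent to the (smooth, strictly convex) conic D:
  it meets D in exactly one point.\<close>
definition tangent_line :: "complex set \<Rightarrow> complex \<Rightarrow> complex \<Rightarrow> bool" where
  "tangent_line D p q \<longleftrightarrow> p \<noteq> q \<and> (\<exists>!z. z \<in> D \<and> z \<in> line_through p q)"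

text \<open>Closed Poncelet n-gon (u 0, ..., u (n-1)) for (C, D), indices mod n:
  vertices on C, every side tangent to D, and at every vertex the two sides
  are different tangent lines (the polygon is obtained by successively drawing
  tangents, it never goes back along the same tangent).\<close>
definition poncelet_ngon :: "complex set \<Rightarrow> complex set \<Rightarrow> nat \<Rightarrow> (nat \<Rightarrow> complex) \<Rightarrow> bool" where
  "poncelet_ngon C D n u \<longleftrightarrow> 3 \<le> n \<and>
     (\<forall>i<n. u i \<in> C \<and> tangent_line D (u i) (u (Suc i mod n))
            \<and> u (Suc (Suc i) mod n) \<noteq> u i)"

text \<open>Rotational sense of a polygon around c (sign of the oriented area of
  the first side seen from c).\<close>
definition rot_sense :: "complex \<Rightarrow> (nat \<Rightarrow> complex) \<Rightarrow> real" where
  "rot_sense c u = sgn (Im (cnj (u 0 - c) * (u 1 - c)))"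

definition poncelet_family :: "complex \<Rightarrow> complex set \<Rightarrow> complex set \<Rightarrow> nat \<Rightarrow> (nat \<Rightarrow> complex) \<Rightarrow> (nat \<Rightarrow> complex) set" where
  "poncelet_family c C D n u = {v. poncelet_ngon C D n v \<and> rot_sense c v = rot_sense c u}"

end

theory Submission
  imports Defs
begin

lemma poly1:
  fixes u al be :: real
  defines "GG \<equiv> al\<^sup>2*u + be\<^sup>2*(1-u)"
  shows "(1 - al\<^sup>2 + be\<^sup>2)\<^sup>2*(u*GG + (1-u)*(1-GG)) + (1 + al\<^sup>2 - be\<^sup>2)\<^sup>2*((1-u)*GG + u*(1-GG))
         - (al\<^sup>2 + be\<^sup>2 - 1)\<^sup>2 = 4*GG*(1-GG) + 4*(be\<^sup>2-al\<^sup>2)\<^sup>2*u*(1-u)"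
  unfolding GG_def by (simp add: power2_eq_square algebra_simps)
lemma poly2:
  fixes u al be :: real
  defines "GG \<equiv> al\<^sup>2*u + be\<^sup>2*(1-u)"
  shows "GG * (1 - GG) - (be\<^sup>2-al\<^sup>2)\<^sup>2*u*(1-u) = al\<^sup>2*(1-al\<^sup>2)*u + be\<^sup>2*(1-be\<^sup>2)*(1-u)"
  unfolding GG_def by (simp add: power2_eq_square algebra_simps)

lemma id1: fixes A B c s :: real shows
 "((A\<^sup>2 - B\<^sup>2) * c + 2 * A * B * s)\<^sup>2 + (2 * A * B * c - (A\<^sup>2 - B\<^sup>2) * s)\<^sup>2 = (A\<^sup>2 + B\<^sup>2)\<^sup>2 * (c\<^sup>2 + s\<^sup>2)"
  by (simp add: power2_eq_square algebra_simps)
lemma id2: fixes A B c s :: real shows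
 "A * ((A\<^sup>2 - B\<^sup>2) * c + 2 * A * B * s) + B * (2 * A * B * c - (A\<^sup>2 - B\<^sup>2) * s) = (A\<^sup>2 + B\<^sup>2) * (A * c + B * s)"
  by (simp add: power2_eq_square algebra_simps)
lemma id3: fixes A B c s :: real shows
 "((A\<^sup>2 - B\<^sup>2) * c + 2 * A * B * s) - (A\<^sup>2 + B\<^sup>2) * c = 2 * B * (A * s - B * c)"
 "(2 * A * B * c - (A\<^sup>2 - B\<^sup>2) * s) - (A\<^sup>2 + B\<^sup>2) * s = - 2 * A * (A * s - B * c)"
  by (simp_all add: power2_eq_square algebra_simps)
lemma id4: fixes A B c s :: real shows
 "(A * c + B * s)\<^sup>2 + (A * s - B * c)\<^sup>2 = (A\<^sup>2 + B\<^sup>2) * (c\<^sup>2 + s\<^sup>2)"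
  by (simp add: power2_eq_square algebra_simps)

locale pc = fixes al be :: real
  assumes al0: "0 < al" and al1: "al < 1" and be0: "0 < be" and be1: "be < 1"
begin

definition G where "G x = al\<^sup>2*(cos x)\<^sup>2 + be\<^sup>2*(sin x)\<^sup>2"
definition gg where "gg x = sqrt (G x)"
definition hh where "hh x = sqrt (1 - G x)"
definition aa where "aa x = arccos (gg x)"
definition PP where "PP x = x + aa x"
definition QQ where "QQ x = x - aa x"
definition dG where "dG x = 2 * (be\<^sup>2 - al\<^sup>2) * cos x * sin x"
definition daa where "daa x = - (dG x / (2*gg x)) / hh x"

lemma G_pos: "0 < G x"
proof -
  have s: "(cos x)\<^sup>2 + (sin x)\<^sup>2 = 1" by simp
  have m: "min (al\<^sup>2) (be\<^sup>2) > 0" using al0 be0 by simp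
  have "G x \<ge> min (al\<^sup>2) (be\<^sup>2) * ((cos x)\<^sup>2 + (sin x)\<^sup>2)"
    unfolding G_def distrib_left
    by (intro add_mono mult_right_mono) auto
  then have "G x \<ge> min (al\<^sup>2) (be\<^sup>2)" using s by simp
  then show ?thesis using m by linarith
qed

lemma G_lt1: "G x < 1"
proof -
  have s: "(cos x)\<^sup>2 + (sin x)\<^sup>2 = 1" by simp
  have m: "max (al\<^sup>2) (be\<^sup>2) < 1" using al0 be0 al1 be1 by (simp add: power_less_one_iff abs_if)
  have "G x \<le> max (al\<^sup>2) (be\<^sup>2) * ((cos x)\<^sup>2 + (sin x)\<^sup>2)"
    unfolding G_def distrib_left
    by (intro add_mono mult_right_mono) auto
  then have "G x \<le> max (al\<^sup>2) (be\<^sup>2)" using s by simp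
  then show ?thesis using m by linarith
qed

lemma gg_pos: "0 < gg x" and gg_lt1: "gg x < 1"
  using G_pos[of x] G_lt1[of x] by (auto simp: gg_def)
lemma hh_pos: "0 < hh x" and hh_lt1: "hh x < 1"
  using G_pos[of x] G_lt1[of x] by (auto simp: hh_def)
lemma gg_sq: "(gg x)\<^sup>2 = G x" using G_pos[of x] by (simp add: gg_def)
lemma hh_sq: "(hh x)\<^sup>2 = 1 - G x" using G_lt1[of x] by (simp add: hh_def)

lemma cos_aa: "cos (aa x) = gg x"
  using gg_pos[of x] gg_lt1[of x] by (simp add: aa_def)
lemma sin_aa: "sin (aa x) = hh x"
  using gg_pos[of x] gg_lt1[of x] by (simp add: aa_def sin_arccos gg_sq hh_def)
lemma aa_bounds: "0 < aa x" "aa x < pi/2"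
proof -
  show "0 < aa x" using arccos_lt_bounded[of "gg x"] gg_pos[of x] gg_lt1[of x] by (simp add: aa_def)
  have "arccos (gg x) < arccos 0"
    by (rule arccos_less_arccos) (use gg_pos[of x] gg_lt1[of x] in auto)
  then show "aa x < pi/2" by (simp add: aa_def)
qed

lemma G_deriv: "(G has_real_derivative dG x) (at x)"
  unfolding G_def dG_def
  by (rule derivative_eq_intros refl | simp)+ (simp add: power2_eq_square algebra_simps)

lemma gg_deriv: "(gg has_real_derivative dG x / (2*gg x)) (at x)"
proof -
  have "((\<lambda>x. sqrt (G x)) has_real_derivative (inverse (sqrt (G x)) / 2) * dG x) (at x)"
    by (rule DERIV_chain2[OF DERIV_real_sqrt G_deriv]) (rule G_pos)
  then show ?thesis by (simp add: gg_def[abs_def] divide_simps mult_ac)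
qed

lemma aa_deriv: "(aa has_real_derivative daa x) (at x)"
proof -
  have "((\<lambda>x. arccos (gg x)) has_real_derivative inverse (- sqrt (1 - (gg x)\<^sup>2)) * (dG x / (2*gg x))) (at x)"
    by (rule DERIV_chain2[OF DERIV_arccos gg_deriv]) (use gg_pos[of x] gg_lt1[of x] in auto)
  then show ?thesis by (simp add: aa_def[abs_def] daa_def gg_sq hh_def[symmetric] divide_simps mult_ac)
qed

end

context pc begin

definition AA where "AA = 1 - al\<^sup>2 + be\<^sup>2"
definition BB where "BB = 1 + al\<^sup>2 - be\<^sup>2"
definition CC where "CC = al\<^sup>2 + be\<^sup>2 - 1"
definition DD where "DD t = AA\<^sup>2*(cos t)\<^sup>2 + BB\<^sup>2*(sin t)\<^sup>2 - CC\<^sup>2"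
definition sig where "sig t = 1 / sqrt (DD t)"

lemma key_ineq: "(dG x)\<^sup>2 < (2 * gg x * hh x)\<^sup>2"
proof -
  have s: "(sin x)\<^sup>2 = 1 - (cos x)\<^sup>2" by (simp add: sin_squared_eq)
  have e: "G x * (1 - G x) - (be\<^sup>2-al\<^sup>2)\<^sup>2*(cos x)\<^sup>2*(sin x)\<^sup>2
      = al\<^sup>2*(1-al\<^sup>2)*(cos x)\<^sup>2 + be\<^sup>2*(1-be\<^sup>2)*(sin x)\<^sup>2"
    unfolding G_def s using poly2[of al "(cos x)\<^sup>2" be] by simp
  have p1: "al\<^sup>2*(1-al\<^sup>2) > 0" using al0 al1 by (simp add: power_less_one_iff abs_if)
  have p2: "be\<^sup>2*(1-be\<^sup>2) > 0" using be0 be1 by (simp add: power_less_one_iff abs_if)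
  have "al\<^sup>2*(1-al\<^sup>2)*(cos x)\<^sup>2 + be\<^sup>2*(1-be\<^sup>2)*(sin x)\<^sup>2 > 0"
  proof (cases "cos x = 0")
    case True
    then have "(sin x)\<^sup>2 = 1" using s by simp
    then show ?thesis using True p2 by simp
  next
    case False
    then have "(cos x)\<^sup>2 > 0" by simp
    then have "al\<^sup>2*(1-al\<^sup>2)*(cos x)\<^sup>2 > 0" using p1 by simp
    moreover have "be\<^sup>2*(1-be\<^sup>2)*(sin x)\<^sup>2 \<ge> 0" using p2 by simp
    ultimately show ?thesis by linarith
  qed
  then have "(be\<^sup>2-al\<^sup>2)\<^sup>2*(cos x)\<^sup>2*(sin x)\<^sup>2 < G x * (1 - G x)" using e by linarith
  moreover have "(dG x)\<^sup>2 = 4*((be\<^sup>2-al\<^sup>2)\<^sup>2*(cos x)\<^sup>2*(sin x)\<^sup>2)"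
    by (simp add: dG_def power_mult_distrib power2_eq_square algebra_simps)
  moreover have "(2 * gg x * hh x)\<^sup>2 = 4 * (G x * (1 - G x))"
    by (simp add: power_mult_distrib gg_sq hh_sq)
  ultimately show ?thesis by linarith
qed

lemma key_ineq2: "\<bar>dG x\<bar> < 2 * gg x * hh x"
proof -
  have "0 < 2 * gg x * hh x" using gg_pos hh_pos by simp
  then show ?thesis using key_ineq[of x]
    by (metis abs_of_pos power2_less_imp_less abs_ge_zero power2_abs)
qed

lemma daa_eq: "2 * gg x * hh x * daa x = - dG x"
  using gg_pos[of x] hh_pos[of x] by (simp add: daa_def field_simps)

lemma one_plus_daa: "0 < 1 + daa x" and one_minus_daa: "0 < 1 - daa x"
proof -
  have p: "0 < 2 * gg x * hh x" using gg_pos hh_pos by simp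
  have "2 * gg x * hh x * (1 + daa x) = 2 * gg x * hh x - dG x"
       "2 * gg x * hh x * (1 - daa x) = 2 * gg x * hh x + dG x"
    using daa_eq[of x] by (simp_all add: algebra_simps)
  moreover have "0 < 2 * gg x * hh x - dG x" "0 < 2 * gg x * hh x + dG x"
    using key_ineq2[of x] by linarith+
  ultimately show "0 < 1 + daa x" "0 < 1 - daa x"
    using p by (metis zero_less_mult_pos)+
qed

lemma cos_PP: "cos (PP x) = cos x * gg x - sin x * hh x"
  by (simp add: PP_def cos_add cos_aa sin_aa)
lemma sin_PP: "sin (PP x) = sin x * gg x + cos x * hh x"
  by (simp add: PP_def sin_add cos_aa sin_aa)
lemma cos_QQ: "cos (QQ x) = cos x * gg x + sin x * hh x"
  by (simp add: QQ_def cos_diff cos_aa sin_aa)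
lemma sin_QQ: "sin (QQ x) = sin x * gg x - cos x * hh x"
  by (simp add: QQ_def sin_diff cos_aa sin_aa)

lemma DD_gen:
  fixes c s g h :: real
  assumes s: "s\<^sup>2 = 1 - c\<^sup>2" and g: "g\<^sup>2 = al\<^sup>2*c\<^sup>2 + be\<^sup>2* s\<^sup>2" and h: "h\<^sup>2 = 1 - g\<^sup>2"
  shows "AA\<^sup>2*(c*g - s*h)\<^sup>2 + BB\<^sup>2*(s*g + c*h)\<^sup>2 - CC\<^sup>2 = (2*g*h - 2*(be\<^sup>2-al\<^sup>2)*c* s)\<^sup>2"
proof -
  define u where "u = c\<^sup>2"
  define GG where "GG = al\<^sup>2*u + be\<^sup>2*(1-u)"
  have g2: "g\<^sup>2 = GG" using g s by (simp add: GG_def u_def)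
  have h2: "h\<^sup>2 = 1 - GG" using h g2 by simp
  have s2: "s\<^sup>2 = 1 - u" using s by (simp add: u_def)
  have e1: "(c*g - s*h)\<^sup>2 = c\<^sup>2*g\<^sup>2 + s\<^sup>2*h\<^sup>2 - 2*(c* s*g*h)" by (simp add: power2_eq_square algebra_simps)
  have e2: "(s*g + c*h)\<^sup>2 = s\<^sup>2*g\<^sup>2 + c\<^sup>2*h\<^sup>2 + 2*(c* s*g*h)" by (simp add: power2_eq_square algebra_simps)
  have e3: "(2*g*h - 2*(be\<^sup>2-al\<^sup>2)*c* s)\<^sup>2 = 4*(g\<^sup>2*h\<^sup>2) - 8*(be\<^sup>2-al\<^sup>2)*(c* s*g*h) + 4*(be\<^sup>2-al\<^sup>2)\<^sup>2*(c\<^sup>2* s\<^sup>2)"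
    by (simp add: power2_eq_square algebra_simps)
  have e4: "BB\<^sup>2 - AA\<^sup>2 = 4*(al\<^sup>2-be\<^sup>2)" by (simp add: AA_def BB_def power2_eq_square algebra_simps)
  have P: "AA\<^sup>2*(u*GG + (1-u)*(1-GG)) + BB\<^sup>2*((1-u)*GG + u*(1-GG)) - CC\<^sup>2 = 4*GG*(1-GG) + 4*(be\<^sup>2-al\<^sup>2)\<^sup>2*u*(1-u)"
    using poly1[where u=u and al=al and be=be] by (simp add: AA_def BB_def CC_def GG_def)
  have "AA\<^sup>2*(c*g - s*h)\<^sup>2 + BB\<^sup>2*(s*g + c*h)\<^sup>2 - CC\<^sup>2
     = AA\<^sup>2*(u*GG + (1-u)*(1-GG)) + BB\<^sup>2*((1-u)*GG + u*(1-GG)) - CC\<^sup>2 + (BB\<^sup>2 - AA\<^sup>2)*(2*(c* s*g*h))"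
    unfolding e1 e2 g2 h2 s2 u_def[symmetric] by (simp add: algebra_simps)
  also have "\<dots> = 4*GG*(1-GG) + 4*(be\<^sup>2-al\<^sup>2)\<^sup>2*u*(1-u) - 8*(be\<^sup>2-al\<^sup>2)*(c* s*g*h)"
    unfolding P e4 by (simp add: algebra_simps)
  also have "\<dots> = (2*g*h - 2*(be\<^sup>2-al\<^sup>2)*c* s)\<^sup>2"
    unfolding e3 g2 h2 power_mult_distrib s2 u_def[symmetric] by (simp add: algebra_simps)
  finally show ?thesis .
qed

lemma DD_PP: "DD (PP x) = (2 * gg x * hh x - dG x)\<^sup>2"
proof -
  have s: "(sin x)\<^sup>2 = 1 - (cos x)\<^sup>2" by (simp add: sin_squared_eq)
  have g: "(gg x)\<^sup>2 = al\<^sup>2*(cos x)\<^sup>2 + be\<^sup>2*(sin x)\<^sup>2" by (simp add: gg_sq G_def)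
  have h: "(hh x)\<^sup>2 = 1 - (gg x)\<^sup>2" by (simp add: hh_sq gg_sq)
  show ?thesis unfolding DD_def cos_PP sin_PP
    using DD_gen[OF s g h] by (simp add: dG_def algebra_simps)
qed

lemma DD_QQ: "DD (QQ x) = (2 * gg x * hh x + dG x)\<^sup>2"
proof -
  have s: "(sin x)\<^sup>2 = 1 - (cos x)\<^sup>2" by (simp add: sin_squared_eq)
  have g: "(gg x)\<^sup>2 = al\<^sup>2*(cos x)\<^sup>2 + be\<^sup>2*(sin x)\<^sup>2" by (simp add: gg_sq G_def)
  have h: "(hh x)\<^sup>2 = 1 - (gg x)\<^sup>2" by (simp add: hh_sq gg_sq)
  have "DD (QQ (x)) = AA\<^sup>2*((cos x)*gg x - (- sin x)*hh x)\<^sup>2 + BB\<^sup>2*((- sin x)*gg x + (cos x)*hh x)\<^sup>2 - CC\<^sup>2"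
    unfolding DD_def cos_QQ sin_QQ by (simp add: power2_eq_square algebra_simps)
  also have "\<dots> = (2 * gg x * hh x - 2*(be\<^sup>2-al\<^sup>2)*cos x*(- sin x))\<^sup>2"
    by (rule DD_gen) (use s g h in simp_all)
  finally show ?thesis by (simp add: dG_def algebra_simps)
qed

lemma sig_PP: "sig (PP x) * (1 + daa x) = 1 / (2 * gg x * hh x)"
proof -
  have p: "0 < 2 * gg x * hh x - dG x" using key_ineq2[of x] by linarith
  have e: "2 * gg x * hh x - dG x = 2 * gg x * hh x * (1 + daa x)"
    using daa_eq[of x] by (simp add: algebra_simps)
  have "sig (PP x) = 1 / (2 * gg x * hh x - dG x)" using p by (simp add: sig_def DD_PP)
  then show ?thesis using e one_plus_daa[of x] by simp
qed

lemma sig_QQ: "sig (QQ x) * (1 - daa x) = 1 / (2 * gg x * hh x)"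
proof -
  have p: "0 < 2 * gg x * hh x + dG x" using key_ineq2[of x] by linarith
  have e: "2 * gg x * hh x + dG x = 2 * gg x * hh x * (1 - daa x)"
    using daa_eq[of x] by (simp add: algebra_simps)
  have "sig (QQ x) = 1 / (2 * gg x * hh x + dG x)" using p by (simp add: sig_def DD_QQ)
  then show ?thesis using e one_minus_daa[of x] by simp
qed

lemma DD_pos: "0 < DD t"
proof -
  have a: "AA\<^sup>2 - CC\<^sup>2 > 0"
  proof -
    have "AA\<^sup>2 - CC\<^sup>2 = (2 - 2*al\<^sup>2) * (2*be\<^sup>2)" by (simp add: AA_def CC_def power2_eq_square algebra_simps)
    moreover have "al\<^sup>2 < 1" using al0 al1 by (simp add: power_less_one_iff abs_if)
    ultimately show ?thesis using be0 by simp
  qed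
  have b: "BB\<^sup>2 - CC\<^sup>2 > 0"
  proof -
    have "BB\<^sup>2 - CC\<^sup>2 = (2 - 2*be\<^sup>2) * (2*al\<^sup>2)" by (simp add: BB_def CC_def power2_eq_square algebra_simps)
    moreover have "be\<^sup>2 < 1" using be0 be1 by (simp add: power_less_one_iff abs_if)
    ultimately show ?thesis using al0 by simp
  qed
  have e: "DD t = (AA\<^sup>2 - CC\<^sup>2)*(cos t)\<^sup>2 + (BB\<^sup>2 - CC\<^sup>2)*(sin t)\<^sup>2"
  proof -
    show ?thesis unfolding DD_def by (simp add: algebra_simps) (simp flip: distrib_right)
  qed
  have "min (AA\<^sup>2 - CC\<^sup>2) (BB\<^sup>2 - CC\<^sup>2) * ((cos t)\<^sup>2 + (sin t)\<^sup>2) \<le> DD t"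
    unfolding e distrib_left by (intro add_mono mult_right_mono) auto
  then show ?thesis using a b by simp
qed

lemma sig_pos: "0 < sig t" using DD_pos[of t] by (simp add: sig_def)

lemma sig_cont: "isCont sig t"
  unfolding sig_def[abs_def] DD_def
  by (rule continuous_intros | use DD_pos[of t, unfolded DD_def] in simp)+

end

lemma global_antideriv:
  fixes f :: "real \<Rightarrow> real"
  assumes "\<And>x. isCont f x"
  shows "\<exists>F. \<forall>x. (F has_real_derivative f x) (at x)"
proof -
  have "\<exists>F. \<forall>x :: real. (-\<infinity>::ereal) < x \<longrightarrow> x < (\<infinity>::ereal) \<longrightarrow> (F has_vector_derivative f x) (at x)"
    by (rule einterval_antiderivative) (use assms in auto)
  then show ?thesis by (auto simp: has_real_derivative_iff_has_vector_derivative)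
qed

lemma shift_int:
  fixes F :: "real \<Rightarrow> real"
  assumes "\<And>x. F (x + 2 * pi) = F x + L"
  shows "F (x + 2 * pi * of_int k) = F x + of_int k * L"
proof -
  have pos: "F (x + 2 * pi * real m) = F x + real m * L" for x m
  proof (induction m arbitrary: x)
    case 0 then show ?case by simp
  next
    case (Suc m)
    have "x + 2 * pi * real (Suc m) = (x + 2 * pi * real m) + 2 * pi" by (simp add: algebra_simps)
    then show ?case using assms[of "x + 2 * pi * real m"] Suc[of x] by (simp add: algebra_simps)
  qed
  show ?thesis
  proof (cases "k \<ge> 0")
    case True
    then show ?thesis using pos[of x "nat k"] by simp
  next
    case False
    have "F (x + 2 * pi * of_int k + 2 * pi * real (nat (-k))) = F (x + 2 * pi * of_int k) + real (nat (-k)) * L"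
      by (rule pos)
    moreover have "x + 2 * pi * of_int k + 2 * pi * real (nat (-k)) = x" using False by simp
    ultimately show ?thesis using False by simp
  qed
qed

lemma cis_eq_int: "cis a = cis b \<Longrightarrow> \<exists>j::int. a = b + 2 * pi * of_int j"
  by (simp add: complex_eq_iff sin_cos_eq_iff[symmetric])
lemma int_cis_eq: "cis (b + 2 * pi * of_int j) = cis b"
  by (simp flip: cis_mult)

lemma int_cos_eq: "cos (b + 2 * pi * of_int j) = cos b" and int_sin_eq: "sin (b + 2 * pi * of_int j) = sin b"
  using int_cis_eq[of b j] by (simp_all add: complex_eq_iff)

context pc begin

lemma G_per: "G (x + 2 * pi * of_int j) = G x"
  by (simp add: G_def int_cos_eq int_sin_eq)
lemma aa_per: "aa (x + 2 * pi * of_int j) = aa x"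
  by (simp add: aa_def gg_def G_per)
lemma PP_per: "PP (x + 2 * pi * of_int j) = PP x + 2 * pi * of_int j"
  by (simp add: PP_def aa_per)
lemma QQ_per: "QQ (x + 2 * pi * of_int j) = QQ x + 2 * pi * of_int j"
  by (simp add: QQ_def aa_per)
lemma sig_per: "sig (x + 2 * pi) = sig x"
  using int_cos_eq[of x 1] int_sin_eq[of x 1] by (simp add: sig_def DD_def)

lemma PP_deriv: "(PP has_real_derivative (1 + daa x)) (at x)"
  unfolding PP_def[abs_def] by (rule derivative_eq_intros aa_deriv refl | simp)+
lemma QQ_deriv: "(QQ has_real_derivative (1 - daa x)) (at x)"
  unfolding QQ_def[abs_def] by (rule derivative_eq_intros aa_deriv refl | simp)+

definition Phi where "Phi = (SOME F. \<forall>x. (F has_real_derivative sig x) (at x))"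
definition W where "W = (SOME F. \<forall>x. (F has_real_derivative cos (2 * x) * sig x) (at x))"

lemma Phi_deriv: "(Phi has_real_derivative sig x) (at x)"
proof -
  have "\<exists>F. \<forall>x. (F has_real_derivative sig x) (at x)"
    by (rule global_antideriv) (rule sig_cont)
  then have "\<forall>x. (Phi has_real_derivative sig x) (at x)" unfolding Phi_def by (rule someI_ex)
  then show ?thesis by blast
qed

lemma W_deriv: "(W has_real_derivative cos (2 * x) * sig x) (at x)"
proof -
  have "\<exists>F. \<forall>x. (F has_real_derivative cos (2 * x) * sig x) (at x)"
    by (rule global_antideriv) (intro continuous_intros sig_cont)
  then have "\<forall>x. (W has_real_derivative cos (2 * x) * sig x) (at x)" unfolding W_def by (rule someI_ex)
  then show ?thesis by blast
qed

definition Lp where "Lp = Phi (2 * pi) - Phi 0"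
definition LW where "LW = W (2 * pi) - W 0"

lemma Phi_shift: "Phi (x + 2 * pi) = Phi x + Lp"
proof -
  have "\<forall>x. ((\<lambda>x. Phi (x + 2 * pi) - Phi x) has_real_derivative 0) (at x)"
  proof
    fix x
    have "((\<lambda>x. Phi (x + 2 * pi) - Phi x) has_real_derivative sig (x + 2 * pi) * 1 - sig x) (at x)"
      by (rule derivative_eq_intros DERIV_chain2[OF Phi_deriv] Phi_deriv refl)+ simp
    then show "((\<lambda>x. Phi (x + 2 * pi) - Phi x) has_real_derivative 0) (at x)" by (simp add: sig_per)
  qed
  from DERIV_isconst_all[OF this, of x 0] show ?thesis by (simp add: Lp_def)
qed

lemma W_shift: "W (x + 2 * pi) = W x + LW"
proof -
  have "\<forall>x. ((\<lambda>x. W (x + 2 * pi) - W x) has_real_derivative 0) (at x)"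
  proof
    fix x
    have "((\<lambda>x. W (x + 2 * pi) - W x) has_real_derivative cos (2*(x + 2 * pi)) * sig (x + 2 * pi) * 1 - cos (2 * x) * sig x) (at x)"
      by (rule derivative_eq_intros DERIV_chain2[OF W_deriv] W_deriv refl)+ simp
    moreover have "cos (2*(x + 2 * pi)) = cos (2 * x)" using int_cos_eq[of "2 * x" 2] by (simp add: algebra_simps)
    ultimately show "((\<lambda>x. W (x + 2 * pi) - W x) has_real_derivative 0) (at x)" by (simp add: sig_per)
  qed
  from DERIV_isconst_all[OF this, of x 0] show ?thesis by (simp add: LW_def)
qed

lemma Lp_pos: "0 < Lp"
proof -
  have "Phi 0 < Phi (2 * pi)"
    by (rule DERIV_pos_imp_increasing[of 0 "2 * pi"]) (use Phi_deriv sig_pos in auto)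
  then show ?thesis by (simp add: Lp_def)
qed

definition c0 where "c0 = Phi (PP 0) - Phi (QQ 0)"
definition KK where "KK = W (PP 0) - W (QQ 0) - cos (2*0)"

lemma Phi_PQ: "Phi (PP x) - Phi (QQ x) = c0"
proof -
  have "\<forall>x. ((\<lambda>x. Phi (PP x) - Phi (QQ x)) has_real_derivative 0) (at x)"
  proof
    fix x
    have "((\<lambda>x. Phi (PP x) - Phi (QQ x)) has_real_derivative sig (PP x) * (1 + daa x) - sig (QQ x) * (1 - daa x)) (at x)"
      by (rule derivative_eq_intros DERIV_chain2[OF Phi_deriv PP_deriv] DERIV_chain2[OF Phi_deriv QQ_deriv] refl | simp)+
    then show "((\<lambda>x. Phi (PP x) - Phi (QQ x)) has_real_derivative 0) (at x)" by (simp add: sig_PP sig_QQ)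
  qed
  from DERIV_isconst_all[OF this, of x 0] show ?thesis by (simp add: c0_def)
qed

lemma W_PQ: "W (PP x) - W (QQ x) - cos (2 * x) = KK"
proof -
  have "\<forall>x. ((\<lambda>x. W (PP x) - W (QQ x) - cos (2 * x)) has_real_derivative 0) (at x)"
  proof
    fix x
    have d: "((\<lambda>x. W (PP x) - W (QQ x) - cos (2 * x)) has_real_derivative
       cos (2 * PP x) * sig (PP x) * (1 + daa x) - cos (2 * QQ x) * sig (QQ x) * (1 - daa x) - (- sin (2 * x) * (2 * 1))) (at x)"
      by (rule derivative_eq_intros DERIV_chain2[OF W_deriv PP_deriv] DERIV_chain2[OF W_deriv QQ_deriv] refl | simp)+
    have p: "0 < 2 * gg x * hh x" using gg_pos hh_pos by simp
    have "cos (2 * PP x) - cos (2 * QQ x) = - 2 * sin (2 * x) * sin (2 * aa x)"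
      unfolding PP_def QQ_def by (simp add: distrib_left cos_add cos_diff)
    also have "sin (2 * aa x) = 2 * gg x * hh x" by (simp add: sin_double cos_aa sin_aa)
    finally have e: "cos (2 * PP x) - cos (2 * QQ x) = - 2 * sin (2 * x) * (2 * gg x * hh x)" .
    have "cos (2 * PP x) * sig (PP x) * (1 + daa x) - cos (2 * QQ x) * sig (QQ x) * (1 - daa x)
        = (cos (2 * PP x) - cos (2 * QQ x)) / (2 * gg x * hh x)"
      by (simp add: mult.assoc sig_PP sig_QQ diff_divide_distrib)
    also have "\<dots> = - 2 * sin (2 * x)" using gg_pos[of x] hh_pos[of x] unfolding e by simp
    finally show "((\<lambda>x. W (PP x) - W (QQ x) - cos (2 * x)) has_real_derivative 0) (at x)"
      using d by simp
  qed
  from DERIV_isconst_all[OF this, of x 0] show ?thesis by (simp add: KK_def)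
qed

end

context pc begin

definition kap where "kap = c0 * LW / Lp - KK"

lemma core:
  assumes n: "0 < n" and ch: "\<forall>i<n. cis (PP (ps i)) = cis (QQ (ps (Suc i mod n)))"
  shows "(\<Sum>i<n. cos (2 * ps i)) = real n * kap"
proof -
  define p where "p i = ps (i mod n)" for i
  have chp: "cis (PP (p i)) = cis (QQ (p (Suc i)))" for i
    using ch[rule_format, of "i mod n"] n by (simp add: p_def mod_Suc_eq)
  define q where "q = rec_nat (p 0) (\<lambda>i r. p (Suc i) + (PP r - QQ (p (Suc i))))"
  have q0: "q 0 = p 0" and qS: "q (Suc i) = p (Suc i) + (PP (q i) - QQ (p (Suc i)))" for i
    by (simp_all add: q_def)
  have qsh: "\<exists>j::int. q i = p i + 2 * pi * of_int j" for i
  proof (induction i)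
    case 0 show ?case using q0 by (intro exI[of _ 0]) simp
  next
    case (Suc i)
    then obtain j::int where j: "q i = p i + 2 * pi * of_int j" by blast
    obtain m::int where m: "PP (p i) = QQ (p (Suc i)) + 2 * pi * of_int m"
      using cis_eq_int[OF chp[of i]] by blast
    have "PP (q i) = PP (p i) + 2 * pi * of_int j" using j PP_per by simp
    then have "q (Suc i) = p (Suc i) + 2 * pi * of_int (j + m)" using qS[of i] m by (simp add: algebra_simps)
    then show ?case by blast
  qed
  have chq: "QQ (q (Suc i)) = PP (q i)" for i
  proof -
    obtain j::int where j: "q (Suc i) = p (Suc i) + 2 * pi * of_int j" using qsh by blast
    have "QQ (q (Suc i)) = QQ (p (Suc i)) + 2 * pi * of_int j" using j QQ_per by simp
    also have "\<dots> = QQ (p (Suc i)) + (q (Suc i) - p (Suc i))" using j by simp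
    also have "\<dots> = PP (q i)" using qS[of i] by simp
    finally show ?thesis .
  qed
  define th where "th i = QQ (q i)" for i
  have thS: "PP (q i) = th (Suc i)" for i using chq by (simp add: th_def)
  obtain k::int where k: "q n = p n + 2 * pi * of_int k" using qsh by blast
  have pn: "p n = q 0" using q0 n by (simp add: p_def)
  have thn: "th n = th 0 + 2 * pi * of_int k" using k pn QQ_per by (simp add: th_def)
  have tel: "(\<Sum>i<n. F (PP (q i)) - F (QQ (q i))) = F (th n) - F (th 0)" for F :: "real \<Rightarrow> real"
    using sum_lessThan_telescope[of "\<lambda>i. F (th i)" n] by (simp add: thS th_def[symmetric])
  have "real n * c0 = (\<Sum>i<n. Phi (PP (q i)) - Phi (QQ (q i)))" by (simp add: Phi_PQ)
  also have "\<dots> = of_int k * Lp" unfolding tel thn using shift_int[where F=Phi and L=Lp, OF Phi_shift] by simp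
  finally have kc: "real n * c0 = of_int k * Lp" .
  have cq: "cos (2 * q i) = cos (2 * ps i)" if "i < n" for i
  proof -
    obtain j::int where j: "q i = p i + 2 * pi * of_int j" using qsh by blast
    have "cos (2 * q i) = cos (2 * p i + 2 * pi * of_int (2 * j))" using j by (simp add: algebra_simps)
    also have "\<dots> = cos (2 * p i)" by (rule int_cos_eq)
    finally show ?thesis using that by (simp add: p_def)
  qed
  have "(\<Sum>i<n. cos (2 * ps i)) + real n * KK = (\<Sum>i<n. cos (2 * q i) + KK)"
    using cq by (simp add: sum.distrib)
  also have "\<dots> = (\<Sum>i<n. W (PP (q i)) - W (QQ (q i)))"
    by (rule sum.cong) (use W_PQ in \<open>auto simp: algebra_simps\<close>)
  also have "\<dots> = of_int k * LW" unfolding tel thn using shift_int[where F=W and L=LW, OF W_shift] by simp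
  finally have "(\<Sum>i<n. cos (2 * ps i)) = of_int k * LW - real n * KK" by simp
  moreover have "of_int k = real n * c0 / Lp" using kc Lp_pos by (simp add: field_simps)
  ultimately show ?thesis by (simp add: kap_def algebra_simps)
qed

lemma PP_mono: assumes "x < y" shows "PP x < PP y"
  by (rule DERIV_pos_imp_increasing[where f=PP, OF assms]) (use PP_deriv one_plus_daa in blast)
lemma QQ_mono: assumes "x < y" shows "QQ x < QQ y"
  by (rule DERIV_pos_imp_increasing[where f=QQ, OF assms]) (use QQ_deriv one_minus_daa in blast)

lemma PP_cis_inj: "cis (PP x) = cis (PP y) \<Longrightarrow> cis (QQ x) = cis (QQ y)"
proof -
  assume "cis (PP x) = cis (PP y)"
  then obtain j::int where j: "PP x = PP y + 2 * pi * of_int j" using cis_eq_int by blast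
  then have "PP x = PP (y + 2 * pi * of_int j)" by (simp add: PP_per)
  then have "x = y + 2 * pi * of_int j"
    by (metis PP_mono less_irrefl linorder_neqE_linordered_idom)
  then show "cis (QQ x) = cis (QQ y)" by (simp add: QQ_per int_cis_eq)
qed

lemma QQ_cis_inj: "cis (QQ x) = cis (QQ y) \<Longrightarrow> cis (PP x) = cis (PP y)"
proof -
  assume "cis (QQ x) = cis (QQ y)"
  then obtain j::int where j: "QQ x = QQ y + 2 * pi * of_int j" using cis_eq_int by blast
  then have "QQ x = QQ (y + 2 * pi * of_int j)" by (simp add: QQ_per)
  then have "x = y + 2 * pi * of_int j"
    by (metis QQ_mono less_irrefl linorder_neqE_linordered_idom)
  then show "cis (PP x) = cis (PP y)" by (simp add: PP_per int_cis_eq)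
qed

lemma cos_side: "cos (PP x - QQ x) = al\<^sup>2 + be\<^sup>2 - 1 + (al\<^sup>2 - be\<^sup>2) * cos (2 * x)"
proof -
  have "PP x - QQ x = 2 * aa x" by (simp add: PP_def QQ_def)
  then have "cos (PP x - QQ x) = 2 * (gg x)\<^sup>2 - 1" by (simp add: cos_double_cos cos_aa)
  also have "\<dots> = al\<^sup>2 + be\<^sup>2 - 1 + (al\<^sup>2 - be\<^sup>2) * cos (2 * x)"
    unfolding gg_sq G_def cos_double_cos
  proof -
    have e: "be\<^sup>2 * (cos x)\<^sup>2 + be\<^sup>2 * (sin x)\<^sup>2 = be\<^sup>2" by (simp flip: distrib_left)
    show "2 * (al\<^sup>2 * (cos x)\<^sup>2 + be\<^sup>2 * (sin x)\<^sup>2) - 1 = al\<^sup>2 + be\<^sup>2 - 1 + (al\<^sup>2 - be\<^sup>2) * (2 * (cos x)\<^sup>2 - 1)"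
      by (simp add: algebra_simps) (use e in linarith)
  qed
  finally show ?thesis .
qed

end

lemma line_cis:
  assumes "sin d \<noteq> 0"
  shows "z \<in> line_through (cis (ps - d)) (cis (ps + d)) \<longleftrightarrow> Re (z * cis (- ps)) = cos d"
proof
  assume "z \<in> line_through (cis (ps - d)) (cis (ps + d))"
  then obtain t where t: "z = cis (ps - d) + of_real t * (cis (ps + d) - cis (ps - d))"
    by (auto simp: line_through_def)
  have "z * cis (- ps) = cis (- d) + of_real t * (cis d - cis (- d))"
    unfolding t by (simp add: algebra_simps cis_mult)
  then show "Re (z * cis (- ps)) = cos d" by simp
next
  assume h: "Re (z * cis (- ps)) = cos d"
  define s where "s = Im (z * cis (- ps))"
  define t where "t = (s + sin d) / (2 * sin d)"
  have "z * cis (- ps) = cis (- d) + of_real t * (cis d - cis (- d))"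
  proof -
    have i: "of_real t * (cis d - cis (- d)) = Complex 0 (s + sin d)"
      using assms by (simp add: complex_eq_iff t_def)
    show ?thesis unfolding i using h by (simp add: complex_eq_iff s_def)
  qed
  note eq = this
  have "z = z * cis (- ps) * cis ps" by (simp add: mult.assoc cis_mult)
  also have "\<dots> = (cis (- d) + of_real t * (cis d - cis (- d))) * cis ps" using eq by simp
  also have "\<dots> = cis (- d) * cis ps + of_real t * (cis d * cis ps - cis (- d) * cis ps)" by algebra
  also have "\<dots> = cis (ps - d) + of_real t * (cis (ps + d) - cis (ps - d))" by (simp add: cis_mult add.commute)
  finally have "z = cis (ps - d) + of_real t * (cis (ps + d) - cis (ps - d))" .
  then show "z \<in> line_through (cis (ps - d)) (cis (ps + d))"
    by (auto simp: line_through_def)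
qed

context pc begin

definition E0 where "E0 = {Complex (al * cos t) (be * sin t) | t. True}"

lemma G_pi: "G (x + pi) = G x" by (simp add: G_def)

lemma side_alg:
  fixes A0 B0 c0 s0 k :: real
  assumes r: "A0\<^sup>2 + B0\<^sup>2 > 0" and cs: "c0\<^sup>2 + s0\<^sup>2 = 1" and l: "A0 * c0 + B0 * s0 = k"
    and uq: "\<And>c1 s1. c1\<^sup>2 + s1\<^sup>2 = 1 \<Longrightarrow> A0 * c1 + B0 * s1 = k \<Longrightarrow> c1 = c0 \<and> s1 = s0"
  shows "k\<^sup>2 = A0\<^sup>2 + B0\<^sup>2"
proof -
  define r2 where "r2 = A0\<^sup>2 + B0\<^sup>2"
  define c1' where "c1' = (A0\<^sup>2 - B0\<^sup>2) * c0 + 2 * A0 * B0 * s0"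
  define s1' where "s1' = 2 * A0 * B0 * c0 - (A0\<^sup>2 - B0\<^sup>2) * s0"
  have r0: "r2 > 0" using r by (simp add: r2_def)
  have "(c1' / r2)\<^sup>2 + (s1' / r2)\<^sup>2 = (c1'\<^sup>2 + s1'\<^sup>2) / r2\<^sup>2" by (simp add: power_divide add_divide_distrib)
  also have "c1'\<^sup>2 + s1'\<^sup>2 = r2\<^sup>2" unfolding c1'_def s1'_def r2_def using id1[of A0 B0 c0 s0] cs by simp
  finally have 1: "(c1' / r2)\<^sup>2 + (s1' / r2)\<^sup>2 = 1" using r0 by simp
  have "A0 * (c1' / r2) + B0 * (s1' / r2) = (A0 * c1' + B0 * s1') / r2" by (simp add: add_divide_distrib)
  also have "A0 * c1' + B0 * s1' = r2 * k" unfolding c1'_def s1'_def r2_def using id2[of A0 B0 c0 s0] l by simp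
  finally have 2: "A0 * (c1' / r2) + B0 * (s1' / r2) = k" using r0 by simp
  from uq[OF 1 2] have e: "c1' = r2 * c0" "s1' = r2 * s0" using r0 by (auto simp: field_simps)
  define D where "D = A0 * s0 - B0 * c0"
  have "2 * B0 * D = 0" "- 2 * A0 * D = 0"
    using id3[of A0 B0 c0 s0] e unfolding c1'_def s1'_def r2_def D_def by simp_all
  then have bd: "B0 * D = 0" "A0 * D = 0" by simp_all
  have "B0 * (B0 * D) + A0 * (A0 * D) = 0" by (simp only: bd mult_zero_right add_0)
  then have "D * r2 = 0" unfolding r2_def by (simp add: power2_eq_square algebra_simps)
  then have D0: "D = 0" using r0 by simp
  have "k\<^sup>2 + D\<^sup>2 = r2 * (c0\<^sup>2 + s0\<^sup>2)" unfolding l[symmetric] D_def r2_def by (rule id4)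
  then show ?thesis using D0 cs by (simp add: r2_def)
qed

end

context pc begin

lemma unit_cis: "norm x = 1 \<Longrightarrow> \<exists>t. x = cis t"
  by (metis cis_Arg norm_zero sgn_eq div_by_1 zero_neq_one of_real_1)

lemma Re_E0: "Re (Complex (al * cos t) (be * sin t) * cis (- p)) = al * cos p * cos t + be * sin p * sin t"
  by (simp add: algebra_simps)

lemma side:
  assumes nx: "norm x = 1" and ny: "norm y = 1" and xy: "x \<noteq> y"
   and ex: "\<exists>w\<in>E0. w \<in> line_through x y"
   and un: "\<forall>w1\<in>E0. \<forall>w2\<in>E0. w1 \<in> line_through x y \<longrightarrow> w2 \<in> line_through x y \<longrightarrow> w1 = w2"
  shows "\<exists>p. (x = cis (QQ p) \<and> y = cis (PP p)) \<or> (x = cis (PP p) \<and> y = cis (QQ p))"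
proof -
  obtain th where x: "x = cis th" using unit_cis[OF nx] by blast
  obtain th' where y0: "y = cis th'" using unit_cis[OF ny] by blast
  define q where "q = (th' - th) / (2 * pi)"
  define de where "de = 2 * pi * (q - of_int \<lfloor>q\<rfloor>)"
  have de0: "0 \<le> de" and de1: "de < 2 * pi"
  proof -
    have f1: "0 \<le> q - of_int \<lfloor>q\<rfloor>" "q - of_int \<lfloor>q\<rfloor> < 1" by linarith+
    then show "0 \<le> de" "de < 2 * pi" unfolding de_def by (simp_all add: mult_less_cancel_left)
  qed
  have "th + de = th' + 2 * pi * of_int (- \<lfloor>q\<rfloor>)" unfolding de_def q_def by (simp add: field_simps)
  then have y: "y = cis (th + de)" using y0 int_cis_eq by metis
  have "de \<noteq> 0" using xy x y by auto
  define d where "d = de / 2"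
  define p where "p = th + d"
  have d0: "0 < d" and d1: "d < pi" using de0 de1 \<open>de \<noteq> 0\<close> by (auto simp: d_def)
  have xp: "x = cis (p - d)" and yp: "y = cis (p + d)" using x y by (simp_all add: p_def d_def add.commute)
  have sd: "sin d \<noteq> 0" using sin_gt_zero[OF d0 d1] by simp
  have L: "z \<in> line_through x y \<longleftrightarrow> Re (z * cis (- p)) = cos d" for z
    unfolding xp yp by (rule line_cis[OF sd])
  obtain w0 where w0: "w0 \<in> E0" "w0 \<in> line_through x y" using ex by blast
  then obtain t0 where t0: "w0 = Complex (al * cos t0) (be * sin t0)" by (auto simp: E0_def)
  have l0: "al * cos p * cos t0 + be * sin p * sin t0 = cos d" using w0(2) L t0 Re_E0 by (simp add: mult_ac)
  have Gp: "(al * cos p)\<^sup>2 + (be * sin p)\<^sup>2 = G p" by (simp add: G_def power_mult_distrib)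
  have k2: "(cos d)\<^sup>2 = (al * cos p)\<^sup>2 + (be * sin p)\<^sup>2"
  proof (rule side_alg[OF _ _ l0])
    show "0 < (al * cos p)\<^sup>2 + (be * sin p)\<^sup>2" using Gp G_pos by simp
    show "(cos t0)\<^sup>2 + (sin t0)\<^sup>2 = 1" by simp
    fix c1 s1 assume cs: "c1\<^sup>2 + s1\<^sup>2 = 1" and l1: "al * cos p * c1 + be * sin p * s1 = cos d"
    obtain t1 where t1: "c1 = cos t1" "s1 = sin t1" using sincos_total_2pi[OF cs] by metis
    define w1 where "w1 = Complex (al * cos t1) (be * sin t1)"
    have "w1 \<in> E0" by (auto simp: E0_def w1_def)
    moreover have "w1 \<in> line_through x y" using L l1 t1 Re_E0 by (simp add: w1_def mult_ac)
    ultimately have "w1 = w0" using un w0 by blast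
    then show "c1 = cos t0 \<and> s1 = sin t0" using t1 t0 al0 be0 by (simp add: w1_def)
  qed
  then have k2': "(cos d)\<^sup>2 = G p" using Gp by simp
  show ?thesis
  proof (cases "cos d > 0")
    case True
    have "cos d = gg p" unfolding gg_def using k2' True by (metis abs_of_pos real_sqrt_abs)
    then have "aa p = d" unfolding aa_def using d0 d1 by (metis arccos_cos less_eq_real_def)
    then have "x = cis (QQ p) \<and> y = cis (PP p)" using xp yp by (simp add: QQ_def PP_def)
    then show ?thesis by blast
  next
    case False
    have "cos d \<noteq> 0" using k2' G_pos[of p] by auto
    then have neg: "cos d < 0" using False by simp
    have "gg (p + pi) = - cos d" unfolding gg_def G_pi using k2' neg
      by (metis abs_of_neg real_sqrt_abs)
    also have "\<dots> = cos (pi - d)" by simp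
    finally have gp: "gg (p + pi) = cos (pi - d)" .
    have "arccos (cos (pi - d)) = pi - d" by (rule arccos_cos) (use d0 d1 in simp_all)
    then have "aa (p + pi) = pi - d" unfolding aa_def gp .
    then have e1: "PP (p + pi) = (p - d) + 2 * pi * of_int 1" and e2: "QQ (p + pi) = p + d"
      by (simp_all add: PP_def QQ_def)
    have "x = cis (PP (p + pi)) \<and> y = cis (QQ (p + pi))"
      using xp yp unfolding e1 e2 int_cis_eq by simp
    then show ?thesis by blast
  qed
qed

end

definition nrm :: "complex \<Rightarrow> real \<Rightarrow> real \<Rightarrow> complex \<Rightarrow> complex" where
  "nrm c R phi z = cis (- phi) * (z - c) / of_real R"

lemma nrm_inv: "R \<noteq> 0 \<Longrightarrow> nrm c R phi (c + of_real R * cis phi * w) = w"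
  by (simp add: nrm_def mult.assoc[symmetric] cis_mult)

lemma nrm_inv2: "R \<noteq> 0 \<Longrightarrow> c + of_real R * cis phi * nrm c R phi z = z"
proof -
  assume R: "R \<noteq> 0"
  have "of_real R * cis phi * nrm c R phi z = (cis phi * cis (- phi)) * (z - c)"
    using R by (simp add: nrm_def field_simps)
  also have "\<dots> = z - c" by (simp add: cis_mult)
  finally show ?thesis by simp
qed

lemma nrm_inj: "R \<noteq> 0 \<Longrightarrow> nrm c R phi z1 = nrm c R phi z2 \<Longrightarrow> z1 = z2"
  by (metis nrm_inv2)

lemma nrm_affine: "nrm c R phi (p + of_real t * (q - p)) = nrm c R phi p + of_real t * (nrm c R phi q - nrm c R phi p)"
  unfolding nrm_def by (simp add: algebra_simps diff_divide_distrib add_divide_distrib)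

lemma nrm_line: "R \<noteq> 0 \<Longrightarrow> (z \<in> line_through p q) = (nrm c R phi z \<in> line_through (nrm c R phi p) (nrm c R phi q))"
proof
  assume "z \<in> line_through p q"
  then obtain t where "z = p + of_real t * (q - p)" by (auto simp: line_through_def)
  then show "nrm c R phi z \<in> line_through (nrm c R phi p) (nrm c R phi q)"
    by (auto simp: line_through_def nrm_affine)
next
  assume R: "R \<noteq> 0" and "nrm c R phi z \<in> line_through (nrm c R phi p) (nrm c R phi q)"
  then obtain t where "nrm c R phi z = nrm c R phi p + of_real t * (nrm c R phi q - nrm c R phi p)"
    by (auto simp: line_through_def)
  then have "nrm c R phi z = nrm c R phi (p + of_real t * (q - p))" by (simp add: nrm_affine)
  then have "z = p + of_real t * (q - p)" using nrm_inj[OF R] by blast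
  then show "z \<in> line_through p q" by (auto simp: line_through_def)
qed

lemma nrm_ell: "R > 0 \<Longrightarrow> (z \<in> ellipse c a b phi) = (nrm c R phi z \<in> {Complex (a / R * cos t) (b / R * sin t) | t. True})"
proof
  assume R: "R > 0" and "z \<in> ellipse c a b phi"
  then obtain t where t: "z = c + cis phi * Complex (a * cos t) (b * sin t)" by (auto simp: ellipse_def)
  have "nrm c R phi z = Complex (a * cos t) (b * sin t) / of_real R"
    unfolding t nrm_def by (simp add: mult.assoc[symmetric] cis_mult)
  also have "\<dots> = Complex (a / R * cos t) (b / R * sin t)" by (simp add: complex_eq_iff)
  finally show "nrm c R phi z \<in> {Complex (a / R * cos t) (b / R * sin t) | t. True}" by blast
next
  assume R: "R > 0" and "nrm c R phi z \<in> {Complex (a / R * cos t) (b / R * sin t) | t. True}"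
  then obtain t where t: "nrm c R phi z = Complex (a / R * cos t) (b / R * sin t)" by blast
  have "z = c + of_real R * cis phi * nrm c R phi z" using nrm_inv2 R by simp
  also have "\<dots> = c + cis phi * (of_real R * Complex (a / R * cos t) (b / R * sin t))" by (simp add: t mult_ac)
  also have "of_real R * Complex (a / R * cos t) (b / R * sin t) = Complex (a * cos t) (b * sin t)"
    using R by (simp add: complex_eq_iff)
  finally show "z \<in> ellipse c a b phi" by (auto simp: ellipse_def)
qed

lemma tan_transfer:
  assumes R: "R > 0" and T: "tangent_line (ellipse c a b phi) p q"
  defines "E \<equiv> {Complex (a / R * cos t) (b / R * sin t) | t. True}"
  shows "(\<exists>w\<in>E. w \<in> line_through (nrm c R phi p) (nrm c R phi q))"
    and "(\<forall>w1\<in>E. \<forall>w2\<in>E. w1 \<in> line_through (nrm c R phi p) (nrm c R phi q) \<longrightarrow>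
             w2 \<in> line_through (nrm c R phi p) (nrm c R phi q) \<longrightarrow> w1 = w2)"
proof -
  from T obtain z0 where z0: "z0 \<in> ellipse c a b phi" "z0 \<in> line_through p q"
    and uq: "\<And>z. z \<in> ellipse c a b phi \<Longrightarrow> z \<in> line_through p q \<Longrightarrow> z = z0"
    unfolding tangent_line_def by metis
  have R0: "R \<noteq> 0" using R by simp
  show "\<exists>w\<in>E. w \<in> line_through (nrm c R phi p) (nrm c R phi q)"
    using z0 nrm_ell[OF R] nrm_line[OF R0] unfolding E_def by blast
  show "\<forall>w1\<in>E. \<forall>w2\<in>E. w1 \<in> line_through (nrm c R phi p) (nrm c R phi q) \<longrightarrow>
             w2 \<in> line_through (nrm c R phi p) (nrm c R phi q) \<longrightarrow> w1 = w2"
  proof (intro ballI impI)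
    fix w1 w2 assume w: "w1 \<in> E" "w2 \<in> E" "w1 \<in> line_through (nrm c R phi p) (nrm c R phi q)"
      "w2 \<in> line_through (nrm c R phi p) (nrm c R phi q)"
    define z1 where "z1 = c + of_real R * cis phi * w1"
    define z2 where "z2 = c + of_real R * cis phi * w2"
    have n1: "nrm c R phi z1 = w1" and n2: "nrm c R phi z2 = w2" using nrm_inv R0 by (simp_all add: z1_def z2_def)
    have "z1 \<in> ellipse c a b phi" using nrm_ell[OF R, of z1 c a b phi] n1 w(1) unfolding E_def by simp
    moreover have "z1 \<in> line_through p q" using nrm_line[OF R0, of z1 p q c phi] n1 w(3) by simp
    ultimately have z1z0: "z1 = z0" by (rule uq)
    have "z2 \<in> ellipse c a b phi" using nrm_ell[OF R, of z2 c a b phi] n2 w(2) unfolding E_def by simp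
    moreover have "z2 \<in> line_through p q" using nrm_line[OF R0, of z2 p q c phi] n2 w(4) by simp
    ultimately have z2z0: "z2 = z0" by (rule uq)
    show "w1 = w2" using n1 n2 z1z0 z2z0 by simp
  qed
qed

lemma cos_angle_cis:
  assumes R: "R > 0"
  shows "cos (angle_at c (c + of_real R * cis phi * cis A) (c + of_real R * cis phi * cis B)) = cos (A - B)"
proof -
  have e1: "c + of_real R * cis phi * cis A - c = of_real R * cis (phi + A)" by (simp add: cis_mult mult.assoc)
  have e2: "c + of_real R * cis phi * cis B - c = of_real R * cis (phi + B)" by (simp add: cis_mult mult.assoc)
  have "(of_real R * cis (phi + A)) \<bullet> (of_real R * cis (phi + B)) = R * R * cos (A - B)"
  proof -
    have "cos (A - B) = cos (A + phi) * cos (B + phi) + sin (A + phi) * sin (B + phi)"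
      using cos_diff[of "A + phi" "B + phi"] by simp
    then show ?thesis by (simp add: inner_complex_def algebra_simps)
  qed
  then have "((c + of_real R * cis phi * cis A - c) \<bullet> (c + of_real R * cis phi * cis B - c)) /
     (norm (c + of_real R * cis phi * cis A - c) * norm (c + of_real R * cis phi * cis B - c)) = cos (A - B)"
    unfolding e1 e2 using R by (simp add: norm_mult)
  then show ?thesis unfolding angle_at_def by simp
qed

lemma ngon_sum:
  fixes c :: complex and R a b phi :: real and n :: nat and u :: "nat \<Rightarrow> complex"
  assumes R: "R > 0" and a: "a > 0" and b: "b > 0"
    and sub: "ellipse c a b phi \<subseteq> ball c R"
    and P: "poncelet_ngon (sphere c R) (ellipse c a b phi) n u"
  shows "(\<Sum>i<n. cos (angle_at c (u i) (u (Suc i mod n))))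
       = real n * ((a/R)\<^sup>2 + (b/R)\<^sup>2 - 1) + ((a/R)\<^sup>2 - (b/R)\<^sup>2) * (real n * pc.kap (a/R) (b/R))"
proof -
  have aR: "a < R"
  proof -
    have "c + cis phi * Complex (a * cos 0) (b * sin 0) \<in> ellipse c a b phi" unfolding ellipse_def by blast
    then have "c + cis phi * Complex (a * cos 0) (b * sin 0) \<in> ball c R" using sub by blast
    moreover have "Complex (a * cos 0) (b * sin 0) = complex_of_real a" by (simp add: complex_eq_iff)
    ultimately show ?thesis using a by (simp add: dist_norm norm_mult)
  qed
  have bR: "b < R"
  proof -
    have "c + cis phi * Complex (a * cos (pi/2)) (b * sin (pi/2)) \<in> ellipse c a b phi" unfolding ellipse_def by blast
    then have "c + cis phi * Complex (a * cos (pi/2)) (b * sin (pi/2)) \<in> ball c R" using sub by blast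
    moreover have "Complex (a * cos (pi/2)) (b * sin (pi/2)) = complex_of_real b * \<i>" by (simp add: complex_eq_iff)
    ultimately show ?thesis using b by (simp add: dist_norm norm_mult)
  qed
  interpret pc "a/R" "b/R" using a b R aR bR by unfold_locales simp_all
  from P have n3: "3 \<le> n" and Pi: "\<And>i. i < n \<Longrightarrow> u i \<in> sphere c R \<and> tangent_line (ellipse c a b phi) (u i) (u (Suc i mod n))
      \<and> u (Suc (Suc i) mod n) \<noteq> u i" unfolding poncelet_ngon_def by auto
  have R0: "R \<noteq> 0" using R by simp
  define x where "x i = nrm c R phi (u i)" for i
  have ux: "u i = c + of_real R * cis phi * x i" for i using nrm_inv2[OF R0] by (simp add: x_def)
  have nx: "norm (x i) = 1" if "i < n" for i
  proof -
    have "dist c (u i) = R" using Pi[OF that] by auto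
    then have "norm (u i - c) = R" by (simp add: dist_norm norm_minus_commute)
    then show ?thesis unfolding x_def nrm_def using R by (simp add: norm_mult norm_divide)
  qed
  have xinj: "x i = x j \<Longrightarrow> u i = u j" for i j using ux by metis
  have E0e: "E0 = {Complex (a / R * cos t) (b / R * sin t) | t. True}" by (simp add: E0_def)
  have sides: "\<exists>p. (x i = cis (QQ p) \<and> x (Suc i mod n) = cis (PP p)) \<or> (x i = cis (PP p) \<and> x (Suc i mod n) = cis (QQ p))"
    if i: "i < n" for i
  proof -
    have T: "tangent_line (ellipse c a b phi) (u i) (u (Suc i mod n))" using Pi[OF i] by blast
    have "u i \<noteq> u (Suc i mod n)" using T by (simp add: tangent_line_def)
    then have ne: "x i \<noteq> x (Suc i mod n)" using xinj by metis
    have j: "Suc i mod n < n" using n3 by simp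
    have ex: "\<exists>w\<in>E0. w \<in> line_through (x i) (x (Suc i mod n))"
      using tan_transfer(1)[OF R T] unfolding E0e x_def .
    have un: "\<forall>w1\<in>E0. \<forall>w2\<in>E0. w1 \<in> line_through (x i) (x (Suc i mod n)) \<longrightarrow>
        w2 \<in> line_through (x i) (x (Suc i mod n)) \<longrightarrow> w1 = w2"
      using tan_transfer(2)[OF R T] unfolding E0e x_def .
    show ?thesis by (rule side[OF nx[OF i] nx[OF j] ne ex un])
  qed
  have "\<forall>i\<in>{..<n}. \<exists>pt. (snd pt \<and> x i = cis (QQ (fst pt)) \<and> x (Suc i mod n) = cis (PP (fst pt)))
        \<or> (\<not> snd pt \<and> x i = cis (PP (fst pt)) \<and> x (Suc i mod n) = cis (QQ (fst pt)))"
  proof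
    fix i assume "i \<in> {..<n}"
    then obtain p where p: "(x i = cis (QQ p) \<and> x (Suc i mod n) = cis (PP p)) \<or> (x i = cis (PP p) \<and> x (Suc i mod n) = cis (QQ p))"
      using sides by auto
    show "\<exists>pt. (snd pt \<and> x i = cis (QQ (fst pt)) \<and> x (Suc i mod n) = cis (PP (fst pt)))
        \<or> (\<not> snd pt \<and> x i = cis (PP (fst pt)) \<and> x (Suc i mod n) = cis (QQ (fst pt)))"
    proof (cases "x i = cis (QQ p) \<and> x (Suc i mod n) = cis (PP p)")
      case True then show ?thesis by (intro exI[of _ "(p, True)"]) simp
    next
      case False then show ?thesis by (intro exI[of _ "(p, False)"]) (use p in auto)
    qed
  qed
  then obtain f where f: "\<forall>i\<in>{..<n}. (snd (f i) \<and> x i = cis (QQ (fst (f i))) \<and> x (Suc i mod n) = cis (PP (fst (f i))))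
        \<or> (\<not> snd (f i) \<and> x i = cis (PP (fst (f i))) \<and> x (Suc i mod n) = cis (QQ (fst (f i))))"
    using bchoice by metis
  define ps where "ps i = fst (f i)" for i
  define tp where "tp i = snd (f i)" for i
  have S: "(tp i \<and> x i = cis (QQ (ps i)) \<and> x (Suc i mod n) = cis (PP (ps i)))
        \<or> (\<not> tp i \<and> x i = cis (PP (ps i)) \<and> x (Suc i mod n) = cis (QQ (ps i)))" if "i < n" for i
    using f that by (simp add: ps_def tp_def)
  have d2: "x (Suc (Suc i) mod n) \<noteq> x i" if "i < n" for i
    using Pi[OF that] xinj by metis
  have cons: "tp (Suc i mod n) = tp i" if i: "i < n" for i
  proof (rule ccontr)
    assume ne: "tp (Suc i mod n) \<noteq> tp i"
    define j where "j = Suc i mod n"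
    have j: "j < n" using n3 by (simp add: j_def)
    have jj: "Suc j mod n = Suc (Suc i) mod n" by (simp add: j_def mod_Suc_eq)
    have Si: "(tp i \<and> x i = cis (QQ (ps i)) \<and> x j = cis (PP (ps i)))
        \<or> (\<not> tp i \<and> x i = cis (PP (ps i)) \<and> x j = cis (QQ (ps i)))" using S[OF i] by (simp add: j_def)
    have Sj: "(tp j \<and> x j = cis (QQ (ps j)) \<and> x (Suc (Suc i) mod n) = cis (PP (ps j)))
        \<or> (\<not> tp j \<and> x j = cis (PP (ps j)) \<and> x (Suc (Suc i) mod n) = cis (QQ (ps j)))" using S[OF j] jj by simp
    have "x (Suc (Suc i) mod n) = x i"
    proof (cases "tp i")
      case True
      then have "\<not> tp j" using ne by (simp add: j_def)
      then have "cis (PP (ps i)) = cis (PP (ps j))" using Si Sj True by auto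
      then have "cis (QQ (ps i)) = cis (QQ (ps j))" by (rule PP_cis_inj)
      then show ?thesis using Si Sj True \<open>\<not> tp j\<close> by auto
    next
      case False
      then have "tp j" using ne by (simp add: j_def)
      then have "cis (QQ (ps i)) = cis (QQ (ps j))" using Si Sj False by auto
      then have "cis (PP (ps i)) = cis (PP (ps j))" by (rule QQ_cis_inj)
      then show ?thesis using Si Sj False \<open>tp j\<close> by auto
    qed
    then show False using d2[OF i] by simp
  qed
  have all: "tp i = tp 0" if "i < n" for i
    using that
  proof (induction i)
    case 0 then show ?case by simp
  next
    case (Suc i)
    have "tp (Suc i mod n) = tp i" using cons[of i] Suc.prems by simp
    then show ?case using Suc by simp
  qed
  have cosi: "cos (angle_at c (u i) (u (Suc i mod n))) = (a/R)\<^sup>2 + (b/R)\<^sup>2 - 1 + ((a/R)\<^sup>2 - (b/R)\<^sup>2) * cos (2 * ps i)"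
    if i: "i < n" for i
  proof -
    have "cos (angle_at c (u i) (u (Suc i mod n))) = cos (PP (ps i) - QQ (ps i))"
    proof (cases "tp i")
      case True
      then have "cos (angle_at c (u i) (u (Suc i mod n))) = cos (QQ (ps i) - PP (ps i))"
        using S[OF i] unfolding ux by (simp add: cos_angle_cis[OF R])
      also have "\<dots> = cos (PP (ps i) - QQ (ps i))" by (metis cos_minus minus_diff_eq)
      finally show ?thesis .
    next
      case False
      then show ?thesis using S[OF i] unfolding ux by (simp add: cos_angle_cis[OF R])
    qed
    then show ?thesis by (simp add: cos_side)
  qed
  have sumc: "(\<Sum>i<n. cos (2 * ps i)) = real n * kap"
  proof (cases "tp 0")
    case True
    show ?thesis
    proof (rule core)
      show "0 < n" using n3 by simp
      show "\<forall>i<n. cis (PP (ps i)) = cis (QQ (ps (Suc i mod n)))"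
      proof (intro allI impI)
        fix i assume i: "i < n"
        have j: "Suc i mod n < n" using n3 by simp
        show "cis (PP (ps i)) = cis (QQ (ps (Suc i mod n)))"
          using S[OF i] S[OF j] all[OF i] all[OF j] True by auto
      qed
    qed
  next
    case False
    define ps' where "ps' i = ps (n - Suc i)" for i
    have "(\<Sum>i<n. cos (2 * ps' i)) = real n * kap"
    proof (rule core)
      show "0 < n" using n3 by simp
      show "\<forall>i<n. cis (PP (ps' i)) = cis (QQ (ps' (Suc i mod n)))"
      proof (intro allI impI)
        fix i assume i: "i < n"
        show "cis (PP (ps' i)) = cis (QQ (ps' (Suc i mod n)))"
        proof (cases "Suc i < n")
          case True
          define j where "j = n - Suc i"
          have j: "j < n" "0 < j" using True by (auto simp: j_def)
          have j1: "j - 1 < n" "Suc (j - 1) mod n = j" using j by auto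
          have "ps' i = ps j" by (simp add: ps'_def j_def)
          moreover have "ps' (Suc i mod n) = ps (j - 1)" using True by (simp add: ps'_def j_def)
          moreover have "x j = cis (PP (ps j))" using S[OF j(1)] all[OF j(1)] False by auto
          moreover have "x j = cis (QQ (ps (j - 1)))" using S[OF j1(1)] all[OF j1(1)] False j1(2) by auto
          ultimately show ?thesis by simp
        next
          case False': False
          then have ii: "i = n - 1" using i by simp
          have n1: "n - 1 < n" "Suc (n - 1) mod n = 0" using n3 by auto
          have "ps' i = ps 0" using ii n3 by (simp add: ps'_def)
          moreover have "ps' (Suc i mod n) = ps (n - 1)" using ii n3 by (simp add: ps'_def)
          moreover have "x 0 = cis (PP (ps 0))" using S[of 0] n3 False by auto
          moreover have "x 0 = cis (QQ (ps (n - 1)))" using S[OF n1(1)] all[OF n1(1)] False n1(2) by auto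
          ultimately show ?thesis by simp
        qed
      qed
    qed
    then show ?thesis by (simp add: ps'_def sum.nat_diff_reindex[where g="\<lambda>i. cos (2 * ps i)"])
  qed
  have "(\<Sum>i<n. cos (angle_at c (u i) (u (Suc i mod n))))
      = (\<Sum>i<n. (a/R)\<^sup>2 + (b/R)\<^sup>2 - 1 + ((a/R)\<^sup>2 - (b/R)\<^sup>2) * cos (2 * ps i))"
    by (rule sum.cong) (simp_all add: cosi)
  also have "\<dots> = real n * ((a/R)\<^sup>2 + (b/R)\<^sup>2 - 1) + ((a/R)\<^sup>2 - (b/R)\<^sup>2) * (\<Sum>i<n. cos (2 * ps i))"
    by (simp add: sum.distrib sum_distrib_left)
  finally show ?thesis using sumc by simp
qed

theorem theorem4p1:
  fixes c :: complex and R a b phi :: real and n :: nat and u :: "nat \<Rightarrow> complex"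
  assumes "R > 0" and "a > 0" and "b > 0"
    and "ellipse c a b phi \<subseteq> ball c R"
    and "poncelet_ngon (sphere c R) (ellipse c a b phi) n u"
  shows "\<forall>v \<in> poncelet_family c (sphere c R) (ellipse c a b phi) n u.
           (\<Sum>i<n. cos (angle_at c (v i) (v (Suc i mod n))))
         = (\<Sum>i<n. cos (angle_at c (u i) (u (Suc i mod n))))"
proof
  fix v assume "v \<in> poncelet_family c (sphere c R) (ellipse c a b phi) n u"
  then have "poncelet_ngon (sphere c R) (ellipse c a b phi) n v" by (simp add: poncelet_family_def)
  then show "(\<Sum>i<n. cos (angle_at c (v i) (v (Suc i mod n))))
         = (\<Sum>i<n. cos (angle_at c (u i) (u (Suc i mod n))))"
    using ngon_sum[OF assms(1-4)] assms(5) by simp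
qed

end
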